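(* In the two-dimensional perturbed elephant random walk with stops, assume $\epsilon+r\neq1$, and let $C=\frac{r}{(\epsilon+r)\Gamma(1-\epsilon-r)}$. Then for all $t\ge1$, $\mathbb{E}[|\boldsymbol\sigma_t|^2]=C\frac{\Gamma(t-\epsilon-r)}{\Gamma(t)}+\frac{\epsilon}{\epsilon+r}$. If moreover $\gamma\in(-\tfrac12,1)$, $\gamma\neq\tfrac12$ and $2\gamma\neq1-\epsilon-r$, then for all $t\ge1$ $$\mathbb{E}[|\boldsymbol X_t|^2]=\frac{\epsilon}{(1-2\gamma)(\epsilon+r)}\,t+\frac{C}{1-\epsilon-r-2\gamma}\,\frac{\Gamma(t+1-\epsilon-r)}{\Gamma(t)}+D\,\frac{\Gamma(t+2\gamma)}{\Gamma(t)},$$ where $D=-\dfrac{1}{\Gamma(2\gamma)}\Big[\dfrac{\epsilon}{(\epsilon+r)(1-2\gamma)}+\dfrac{r}{(\epsilon+r)(1-\epsilon-r-2\gamma)}\Big]$ (with $1/\Gamma(0)=0$ when $\gamma=0$).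
   Context: Two-dimensional perturbed elephant random walk with stops: let $\mathbf i,\mathbf j$ be the standard basis of $\mathbb R^2$, $I$ the identity matrix and $A=\begin{bmatrix}0&-1\\1&0\end{bmatrix}$ (rotation by $\pi/2$). Fix $p,q,p',q',r\in(0,1)$ with $p+q+p'+q'+r=1$, $\epsilon\in(0,1)$, and $s_1,\dots,s_4\in(0,1)$ with $s_1+s_2+s_3+s_4=1$; set $\gamma=p-q$, $\gamma'=p'-q'$. Steps $\boldsymbol\sigma_t\in\{\mathbf i,\mathbf j,-\mathbf i,-\mathbf j,\mathbf 0\}$, $\boldsymbol X_0=\mathbf 0$, $\boldsymbol X_t=\boldsymbol\sigma_1+\dots+\boldsymbol\sigma_t$. The first step equals $\mathbf i,\mathbf j,-\mathbf i,-\mathbf j$ with probabilities $s_1,s_2,s_3,s_4$. For $t\ge1$, conditionally on $\boldsymbol\sigma_1,\dots,\boldsymbol\sigma_t$, choose $k\in\{1,\dots,t\}$ uniformly at random. If $|\boldsymbol\sigma_k|=1$, then $\boldsymbol\sigma_{t+1}$ equals $\boldsymbol\sigma_k$, $-\boldsymbol\sigma_k$, $A\boldsymbol\sigma_k$, $A^{-1}\boldsymbol\sigma_k$, $\mathbf 0$ with probabilities $p,q,p',q',r$ respectively. If $\boldsymbol\sigma_k=\mathbf 0$, then $\boldsymbol\sigma_{t+1}$ equals each of $\mathbf i,\mathbf j,-\mathbf i,-\mathbf j$ with probability $\epsilon/4$ and $\mathbf 0$ with probability $1-\epsilon$. *)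

theory Defs
  imports "HOL-Probability.Probability"
begin

(* Vectors in R^2 are modelled as real \<times> real; i = (1,0), j = (0,1). *)
definition rotA :: "real \<times> real \<Rightarrow> real \<times> real" where
  "rotA v = (- snd v, fst v)"

definition rotAinv :: "real \<times> real \<Rightarrow> real \<times> real" where
  "rotAinv v = (snd v, - fst v)"

definition first_step :: "real \<Rightarrow> real \<Rightarrow> real \<Rightarrow> real \<Rightarrow> (real \<times> real) pmf" where
  "first_step s1 s2 s3 s4 =
     pmf_of_list [((1,0), s1), ((0,1), s2), ((-1,0), s3), ((0,-1), s4)]"

(* conditional law of sigma_{t+1} given the remembered step sigma_k = v *)
definition next_step ::
  "real \<Rightarrow> real \<Rightarrow> real \<Rightarrow> real \<Rightarrow> real \<Rightarrow> real \<Rightarrow> real \<times> real \<Rightarrow> (real \<times> real) pmf" where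
  "next_step p q p' q' r \<epsilon> v =
     (if norm v = 1
      then pmf_of_list [(v, p), (- v, q), (rotA v, p'), (rotAinv v, q'), (0, r)]
      else pmf_of_list [((1,0), \<epsilon>/4), ((0,1), \<epsilon>/4), ((-1,0), \<epsilon>/4), ((0,-1), \<epsilon>/4),
                        (0, 1 - \<epsilon>)])"

(* walk_path ... t : joint law of the list [sigma_1, ..., sigma_t] *)
fun walk_path ::
  "real \<Rightarrow> real \<Rightarrow> real \<Rightarrow> real \<Rightarrow> real \<Rightarrow> real \<Rightarrow>
   real \<Rightarrow> real \<Rightarrow> real \<Rightarrow> real \<Rightarrow> nat \<Rightarrow> (real \<times> real) list pmf" where
  "walk_path p q p' q' r \<epsilon> s1 s2 s3 s4 0 = return_pmf []"
| "walk_path p q p' q' r \<epsilon> s1 s2 s3 s4 (Suc 0) =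
     map_pmf (\<lambda>s. [s]) (first_step s1 s2 s3 s4)"
| "walk_path p q p' q' r \<epsilon> s1 s2 s3 s4 (Suc (Suc t)) =
     bind_pmf (walk_path p q p' q' r \<epsilon> s1 s2 s3 s4 (Suc t)) (\<lambda>xs.
       map_pmf (\<lambda>s. xs @ [s])
         (bind_pmf (pmf_of_set {..<length xs}) (\<lambda>k. next_step p q p' q' r \<epsilon> (xs ! k))))"

end

theory Submission
  imports Defs
begin


lemma expectation_pmf_of_list:
  fixes f :: "'a \<Rightarrow> real"
  assumes wf: "pmf_of_list_wf xs"
  shows "measure_pmf.expectation (pmf_of_list xs) f = (\<Sum>z\<leftarrow>xs. snd z * f (fst z))"
proof -
  have "measure_pmf.expectation (pmf_of_list xs) f = (\<Sum>a\<in>set (map fst xs). f a * pmf (pmf_of_list xs) a)"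
    using set_pmf_of_list[OF wf] by (intro integral_measure_pmf_real) auto
  also have "\<dots> = (\<Sum>a\<in>set (map fst xs). f a * sum_list (map snd (filter (\<lambda>z. fst z = a) xs)))"
    using wf by (simp add: pmf_pmf_of_list)
  also have "\<dots> = (\<Sum>a\<in>set (map fst xs). (\<Sum>i = 0..<length xs.
                     if fst (xs ! i) = a then snd (xs ! i) * f a else 0))"
    by (intro sum.cong refl, subst sum_list_map_filter', subst sum_list_sum_nth)
       (auto simp: sum_distrib_left intro!: sum.cong)
  also have "\<dots> = (\<Sum>i = 0..<length xs. (\<Sum>a\<in>set (map fst xs).
                     if fst (xs ! i) = a then snd (xs ! i) * f a else 0))"
    by (rule sum.swap)
  also have "\<dots> = (\<Sum>i = 0..<length xs. snd (xs ! i) * f (fst (xs ! i)))"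
    by (intro sum.cong refl) (simp add: sum.delta)
  also have "\<dots> = (\<Sum>z\<leftarrow>xs. snd z * f (fst z))"
    by (subst sum_list_sum_nth) simp
  finally show ?thesis .
qed

lemma exp_cong_pmf:
  fixes f g :: "'a \<Rightarrow> real"
  shows "(\<And>x. x \<in> set_pmf M \<Longrightarrow> f x = g x) \<Longrightarrow> measure_pmf.expectation M f = measure_pmf.expectation M g"
  by (intro integral_cong_AE) (auto simp: AE_measure_pmf_iff)

lemma exp_bind:
  fixes h :: "'b \<Rightarrow> real"
  assumes "finite (set_pmf p)" "\<And>x. x \<in> set_pmf p \<Longrightarrow> finite (set_pmf (f x))"
  shows "measure_pmf.expectation (p \<bind> f) h = measure_pmf.expectation p (\<lambda>x. measure_pmf.expectation (f x) h)"
  using assms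
  by (subst pmf_expectation_bind[of "set_pmf p"], simp_all,
      subst integral_measure_pmf[of "set_pmf p"], simp_all)

lemma exp_lin:
  fixes f g :: "'a \<Rightarrow> real"
  assumes "finite (set_pmf M)"
  shows "measure_pmf.expectation M (\<lambda>x. \<alpha> * f x + \<beta> * g x + c) =
         \<alpha> * measure_pmf.expectation M f + \<beta> * measure_pmf.expectation M g + c"
proof -
  have i: "integrable (measure_pmf M) h" for h :: "'a \<Rightarrow> real"
    using assms by (rule integrable_measure_pmf_finite)
  show ?thesis
    by (simp add: i)
qed

lemma normsq: "(norm (z::real\<times>real))\<^sup>2 = (fst z)\<^sup>2 + (snd z)\<^sup>2"
  by (cases z) (simp add: norm_Pair)

lemma aux_alg: "(L::real) \<noteq> 0 \<Longrightarrow> 0 + (x::real)\<^sup>2 + y\<^sup>2 + e +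
    ((2 * (p - q) * x + 2 * (p' - q') * y) * x +
     (2 * (p - q) * y - 2 * (p' - q') * x) * y +
     (1 - r - e) * S) / L =
       (1 + 2 * (p - q) / L) * (x\<^sup>2 + y\<^sup>2)
        + ((1 - r - e) / L) * S + e"
  by (simp add: field_simps power2_eq_square)

definition Sset :: "(real \<times> real) set" where
  "Sset = {(1,0),(0,1),(-1,0),(0,-1),(0,0)}"

lemma sum_nth_identity:
  "(\<Sum>k<length xs. c0 + c1 * fst (xs!k) + c2 * snd (xs!k) + c3 * ((fst (xs!k))\<^sup>2 + (snd (xs!k))\<^sup>2))
    = real (length xs) * c0 + c1 * fst (sum_list xs) + c2 * snd (sum_list xs)
      + c3 * (\<Sum>x\<leftarrow>xs. (norm x)\<^sup>2)"
proof (induction xs)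
  case (Cons x xs)
  show ?case
    apply (subst length_Cons, subst sum.lessThan_Suc_shift)
    using Cons by (simp add: normsq algebra_simps)
qed simp



context
  fixes p q p' q' r \<epsilon> s1 s2 s3 s4 :: real
  assumes pos: "p > 0" "q > 0" "p' > 0" "q' > 0" "r > 0" "\<epsilon> > 0" "\<epsilon> < 1"
    "s1 > 0" "s2 > 0" "s3 > 0" "s4 > 0"
    and sum1: "p + q + p' + q' + r = 1" and sum2: "s1 + s2 + s3 + s4 = 1"
begin

lemma wf_first: "pmf_of_list_wf [((1::real,0::real), s1), ((0,1), s2), ((-1,0), s3), ((0,-1), s4)]"
  using pos sum2 by (auto simp: pmf_of_list_wf_def)

lemma wf_next1: "pmf_of_list_wf [(v, p), (- v, q), (rotA v, p'), (rotAinv v, q'), (0, r)]"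
  using pos sum1 by (auto simp: pmf_of_list_wf_def)

lemma wf_next2: "pmf_of_list_wf [((1::real,0::real), \<epsilon>/4), ((0,1), \<epsilon>/4), ((-1,0), \<epsilon>/4), ((0,-1), \<epsilon>/4),
                        (0, 1 - \<epsilon>)]"
  using pos by (auto simp: pmf_of_list_wf_def)

lemma set_next: "v \<in> Sset \<Longrightarrow> set_pmf (next_step p q p' q' r \<epsilon> v) \<subseteq> Sset"
  unfolding next_step_def
  apply (split if_split, intro conjI impI)
  subgoal by (rule order.trans[OF set_pmf_of_list[OF wf_next1]])
     (auto simp: Sset_def rotA_def rotAinv_def zero_prod_def)
  subgoal by (rule order.trans[OF set_pmf_of_list[OF wf_next2]])
     (auto simp: Sset_def zero_prod_def)
  done

lemma fin_next: "finite (set_pmf (next_step p q p' q' r \<epsilon> v))"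
  unfolding next_step_def
  using finite_set_pmf_of_list[OF wf_next1] finite_set_pmf_of_list[OF wf_next2] by simp

lemma exp_next_e1: "norm v = 1 \<Longrightarrow> measure_pmf.expectation (next_step p q p' q' r \<epsilon> v) f =
   (\<Sum>z\<leftarrow>[(v, p), (- v, q), (rotA v, p'), (rotAinv v, q'), (0, r)]. snd z * f (fst z))"
  by (simp add: next_step_def expectation_pmf_of_list[OF wf_next1] del: sum_list.Cons)

lemma exp_next_e2: "norm v \<noteq> 1 \<Longrightarrow> measure_pmf.expectation (next_step p q p' q' r \<epsilon> v) f =
   (\<Sum>z\<leftarrow>[((1::real,0::real), \<epsilon>/4), ((0,1), \<epsilon>/4), ((-1,0), \<epsilon>/4), ((0,-1), \<epsilon>/4),
                        (0, 1 - \<epsilon>)]. snd z * f (fst z))"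
  by (simp add: next_step_def expectation_pmf_of_list[OF wf_next2] del: sum_list.Cons)

lemma exp_next:
  assumes "v \<in> Sset"
  shows "measure_pmf.expectation (next_step p q p' q' r \<epsilon> v) (\<lambda>s. c + (norm (X + s))\<^sup>2)
     = (c + (fst X)\<^sup>2 + (snd X)\<^sup>2 + \<epsilon>) + (2*(p-q)* fst X + 2*(p'-q')* snd X) * fst v
       + (2*(p-q)* snd X - 2*(p'-q')* fst X) * snd v + (1 - r - \<epsilon>) * ((fst v)\<^sup>2 + (snd v)\<^sup>2)"
proof -
  have r: "r = 1 - p - q - p' - q'" using sum1 by simp
  obtain x y where X: "X = (x,y)" by (cases X)
  have n10: "norm ((1::real),(0::real)) = 1" "norm ((0::real),(1::real)) = 1"
    "norm ((-1::real),(0::real)) = 1" "norm ((0::real),(-1::real)) = 1"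
    "norm ((0::real),(0::real)) \<noteq> 1" by (simp_all add: norm_Pair)
  from assms consider "v = (1,0)" | "v = (0,1)" | "v = (-1,0)" | "v = (0,-1)" | "v = (0,0)"
    unfolding Sset_def by blast
  then show ?thesis
  proof cases
    case 1 then show ?thesis
      using n10 by (simp add: exp_next_e1 normsq X rotA_def rotAinv_def) (simp add: r power2_eq_square algebra_simps)
  next
    case 2 then show ?thesis
      using n10 by (simp add: exp_next_e1 normsq X rotA_def rotAinv_def) (simp add: r power2_eq_square algebra_simps)
  next
    case 3 then show ?thesis
      using n10 by (simp add: exp_next_e1 normsq X rotA_def rotAinv_def) (simp add: r power2_eq_square algebra_simps)
  next
    case 4 then show ?thesis
      using n10 by (simp add: exp_next_e1 normsq X rotA_def rotAinv_def) (simp add: r power2_eq_square algebra_simps)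
  next
    case 5 then show ?thesis
      using n10 by (simp add: exp_next_e2 normsq X) (simp add: power2_eq_square field_simps)
  qed
qed

abbreviation "W \<equiv> walk_path p q p' q' r \<epsilon> s1 s2 s3 s4"

lemma supp_fin: "finite (set_pmf (W t)) \<and> (\<forall>xs\<in>set_pmf (W t). length xs = t \<and> set xs \<subseteq> Sset)"
proof (induction t)
  case 0
  then show ?case by simp
next
  case (Suc t)
  show ?case
  proof (cases t)
    case 0
    have "set_pmf (first_step s1 s2 s3 s4) \<subseteq> Sset"
      unfolding first_step_def
      by (rule order.trans[OF set_pmf_of_list[OF wf_first]]) (auto simp: Sset_def)
    moreover have "finite (set_pmf (first_step s1 s2 s3 s4))"
      unfolding first_step_def by (rule finite_set_pmf_of_list[OF wf_first])
    ultimately show ?thesis using 0 by auto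
  next
    case (Suc u)
    have fin: "finite (set_pmf (W t))" and sp: "\<And>xs. xs \<in> set_pmf (W t) \<Longrightarrow> length xs = t \<and> set xs \<subseteq> Sset"
      using Suc.IH by auto
    define U where "U = (\<Union>xs\<in>set_pmf (W t). (\<lambda>s. xs @ [s]) `
             (\<Union>k\<in>{..<length xs}. set_pmf (next_step p q p' q' r \<epsilon> (xs ! k))))"
    have eq: "set_pmf (W (Suc t)) = U"
    proof -
      have "set_pmf (W (Suc t)) = (\<Union>xs\<in>set_pmf (W t). set_pmf (map_pmf (\<lambda>s. xs @ [s])
         (pmf_of_set {..<length xs} \<bind> (\<lambda>k. next_step p q p' q' r \<epsilon> (xs ! k)))))"
        unfolding Suc walk_path.simps set_bind_pmf ..
      also have "\<dots> = U" unfolding U_def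
      proof (intro SUP_cong refl)
        fix xs assume "xs \<in> set_pmf (W t)"
        then have "length xs = Suc u" using sp Suc by blast
        moreover have "set_pmf (pmf_of_set {..<Suc u}) = {..<Suc u}" by (rule set_pmf_of_set) auto
        ultimately show "set_pmf (map_pmf (\<lambda>s. xs @ [s])
         (pmf_of_set {..<length xs} \<bind> (\<lambda>k. next_step p q p' q' r \<epsilon> (xs ! k)))) =
           (\<lambda>s. xs @ [s]) ` (\<Union>k\<in>{..<length xs}. set_pmf (next_step p q p' q' r \<epsilon> (xs ! k)))"
          by (simp add: set_bind_pmf)
      qed
      finally show ?thesis .
    qed
    have finU: "finite U" unfolding U_def
      using fin fin_next by (intro finite_UN_I finite_imageI) auto
    have key: "s \<in> Sset" if "xs \<in> set_pmf (W t)" "k < length xs"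
        "s \<in> set_pmf (next_step p q p' q' r \<epsilon> (xs ! k))" for xs k s
    proof -
      have "xs ! k \<in> Sset" using sp[OF that(1)] that(2) by auto
      then show "s \<in> Sset" using set_next[OF \<open>xs ! k \<in> Sset\<close>] that(3) by blast
    qed
    have allU: "\<forall>ys \<in> U. length ys = Suc t \<and> set ys \<subseteq> Sset"
    proof
      fix ys assume "ys \<in> U"
      then obtain xs k s where "xs \<in> set_pmf (W t)" "k < length xs"
        "s \<in> set_pmf (next_step p q p' q' r \<epsilon> (xs ! k))" "ys = xs @ [s]"
        unfolding U_def by blast
      then show "length ys = Suc t \<and> set ys \<subseteq> Sset" using sp key by auto
    qed
    show ?thesis unfolding eq using finU allU by blast
  qed
qed

lemma exp_step:
  fixes g :: "(real \<times> real) list \<Rightarrow> real"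
  shows "measure_pmf.expectation (W (Suc (Suc t))) g =
    measure_pmf.expectation (W (Suc t)) (\<lambda>xs. (\<Sum>k<length xs.
        measure_pmf.expectation (next_step p q p' q' r \<epsilon> (xs ! k)) (\<lambda>s. g (xs @ [s]))) / real (length xs))"
proof -
  have fin: "finite (set_pmf (W (Suc t)))" and sp: "\<And>xs. xs \<in> set_pmf (W (Suc t)) \<Longrightarrow> length xs = Suc t"
    using supp_fin[of "Suc t"] by auto
  have so: "set_pmf (pmf_of_set {..<Suc t}) = {..<Suc t}" by (rule set_pmf_of_set) auto
  have inner: "measure_pmf.expectation (map_pmf (\<lambda>s. xs @ [s])
         (pmf_of_set {..<length xs} \<bind> (\<lambda>k. next_step p q p' q' r \<epsilon> (xs ! k)))) g =
     (\<Sum>k<length xs. measure_pmf.expectation (next_step p q p' q' r \<epsilon> (xs ! k)) (\<lambda>s. g (xs @ [s]))) / real (length xs)"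
    if "length xs = Suc t" for xs
  proof -
    have "measure_pmf.expectation (map_pmf (\<lambda>s. xs @ [s])
         (pmf_of_set {..<length xs} \<bind> (\<lambda>k. next_step p q p' q' r \<epsilon> (xs ! k)))) g =
       measure_pmf.expectation (pmf_of_set {..<length xs} \<bind> (\<lambda>k. next_step p q p' q' r \<epsilon> (xs ! k))) (\<lambda>s. g (xs @ [s]))"
      by simp
    also have "\<dots> = measure_pmf.expectation (pmf_of_set {..<length xs}) (\<lambda>k. measure_pmf.expectation (next_step p q p' q' r \<epsilon> (xs ! k)) (\<lambda>s. g (xs @ [s])))"
      by (rule exp_bind) (simp_all add: that so fin_next)
    also have "\<dots> = (\<Sum>k<length xs. measure_pmf.expectation (next_step p q p' q' r \<epsilon> (xs ! k)) (\<lambda>s. g (xs @ [s]))) / real (length xs)"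
      by (subst integral_pmf_of_set) (auto simp: that)
    finally show ?thesis .
  qed
  have finb: "finite (set_pmf (map_pmf (\<lambda>s. xs @ [s])
         (pmf_of_set {..<length xs} \<bind> (\<lambda>k. next_step p q p' q' r \<epsilon> (xs ! k)))))"
    if "length xs = Suc t" for xs
    using that fin_next by (simp add: set_bind_pmf so)
  show ?thesis
    unfolding walk_path.simps
    apply (subst exp_bind[OF fin])
    subgoal for xs using sp[of xs] finb by blast
    apply (rule exp_cong_pmf)
    subgoal for xs using sp[of xs] inner by blast
    done
qed

end


context
  fixes p q p' q' r \<epsilon> s1 s2 s3 s4 :: real
  assumes pos: "p > 0" "q > 0" "p' > 0" "q' > 0" "r > 0" "\<epsilon> > 0" "\<epsilon> < 1"
    "s1 > 0" "s2 > 0" "s3 > 0" "s4 > 0"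
    and sum1: "p + q + p' + q' + r = 1" and sum2: "s1 + s2 + s3 + s4 = 1"
begin

abbreviation "WW \<equiv> walk_path p q p' q' r \<epsilon> s1 s2 s3 s4"

lemmas supp = supp_fin[OF pos sum1 sum2]
lemmas step = exp_step[OF pos sum1 sum2]
lemmas enext = exp_next[OF pos sum1 sum2]

lemma inner_sum:
  assumes "set xs \<subseteq> Sset" "length xs = Suc u"
  shows "(\<Sum>k<length xs. measure_pmf.expectation (next_step p q p' q' r \<epsilon> (xs ! k))
            (\<lambda>s. c + (norm (X + s))\<^sup>2)) / real (length xs)
    = c + (fst X)\<^sup>2 + (snd X)\<^sup>2 + \<epsilon>
      + ((2*(p-q)* fst X + 2*(p'-q')* snd X) * fst (sum_list xs)
      + (2*(p-q)* snd X - 2*(p'-q')* fst X) * snd (sum_list xs)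
      + (1 - r - \<epsilon>) * (\<Sum>x\<leftarrow>xs. (norm x)\<^sup>2)) / real (Suc u)"
proof -
  have "(\<Sum>k<length xs. measure_pmf.expectation (next_step p q p' q' r \<epsilon> (xs ! k))
            (\<lambda>s. c + (norm (X + s))\<^sup>2)) =
        (\<Sum>k<length xs. (c + (fst X)\<^sup>2 + (snd X)\<^sup>2 + \<epsilon>) + (2*(p-q)* fst X + 2*(p'-q')* snd X) * fst (xs!k)
       + (2*(p-q)* snd X - 2*(p'-q')* fst X) * snd (xs!k) + (1 - r - \<epsilon>) * ((fst (xs!k))\<^sup>2 + (snd (xs!k))\<^sup>2))"
    using assms by (intro sum.cong refl enext) auto
  also have "\<dots> = real (length xs) * (c + (fst X)\<^sup>2 + (snd X)\<^sup>2 + \<epsilon>)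
      + (2*(p-q)* fst X + 2*(p'-q')* snd X) * fst (sum_list xs)
      + (2*(p-q)* snd X - 2*(p'-q')* fst X) * snd (sum_list xs)
      + (1 - r - \<epsilon>) * (\<Sum>x\<leftarrow>xs. (norm x)\<^sup>2)"
    by (rule sum_nth_identity)
  finally show ?thesis using assms(2) by (simp add: field_simps)
qed

lemma fin_W: "finite (set_pmf (WW t))" using supp by blast

lemma base_a: "measure_pmf.expectation (WW 1) (\<lambda>xs. (norm (xs ! 0))\<^sup>2) = 1"
  and base_A: "measure_pmf.expectation (WW 1) (\<lambda>xs. \<Sum>x\<leftarrow>xs. (norm x)\<^sup>2) = 1"
  and base_M: "measure_pmf.expectation (WW 1) (\<lambda>xs. (norm (sum_list xs))\<^sup>2) = 1"
  using sum2 by (simp_all add: first_step_def expectation_pmf_of_list[OF wf_first[OF pos sum1 sum2]] normsq)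

lemma rec_a: "measure_pmf.expectation (WW (Suc (Suc u))) (\<lambda>xs. (norm (xs ! Suc u))\<^sup>2) =
   \<epsilon> + (1 - r - \<epsilon>) * measure_pmf.expectation (WW (Suc u)) (\<lambda>xs. \<Sum>x\<leftarrow>xs. (norm x)\<^sup>2) / real (Suc u)"
proof -
  have "measure_pmf.expectation (WW (Suc (Suc u))) (\<lambda>xs. (norm (xs ! Suc u))\<^sup>2) =
     measure_pmf.expectation (WW (Suc u)) (\<lambda>xs. ((1 - r - \<epsilon>) / real (Suc u)) * (\<Sum>x\<leftarrow>xs. (norm x)\<^sup>2) + 0 * 0 + \<epsilon>)"
    unfolding step
  proof (rule exp_cong_pmf)
    fix xs assume "xs \<in> set_pmf (WW (Suc u))"
    then have L: "length xs = Suc u" and S: "set xs \<subseteq> Sset" using supp by blast+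
    have "(\<Sum>k<length xs. measure_pmf.expectation (next_step p q p' q' r \<epsilon> (xs ! k))
        (\<lambda>s. (norm ((xs @ [s]) ! Suc u))\<^sup>2)) = (\<Sum>k<length xs. measure_pmf.expectation (next_step p q p' q' r \<epsilon> (xs ! k))
        (\<lambda>s. 0 + (norm (0 + s))\<^sup>2))"
      using L by (intro sum.cong refl) (metis add_0 nth_append_length)
    then show "(\<Sum>k<length xs. measure_pmf.expectation (next_step p q p' q' r \<epsilon> (xs ! k))
        (\<lambda>s. (norm ((xs @ [s]) ! Suc u))\<^sup>2)) / real (length xs) =
       ((1 - r - \<epsilon>) / real (Suc u)) * (\<Sum>x\<leftarrow>xs. (norm x)\<^sup>2) + 0 * 0 + \<epsilon>"
      using inner_sum[OF S L, of 0 0] by (simp add: field_simps)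
  qed
  also have "\<dots> = \<epsilon> + (1 - r - \<epsilon>) * measure_pmf.expectation (WW (Suc u)) (\<lambda>xs. \<Sum>x\<leftarrow>xs. (norm x)\<^sup>2) / real (Suc u)"
    by (subst exp_lin[OF fin_W]) simp
  finally show ?thesis .
qed

lemma rec_A: "measure_pmf.expectation (WW (Suc (Suc u))) (\<lambda>xs. \<Sum>x\<leftarrow>xs. (norm x)\<^sup>2) =
   measure_pmf.expectation (WW (Suc u)) (\<lambda>xs. \<Sum>x\<leftarrow>xs. (norm x)\<^sup>2) + \<epsilon> +
   (1 - r - \<epsilon>) * measure_pmf.expectation (WW (Suc u)) (\<lambda>xs. \<Sum>x\<leftarrow>xs. (norm x)\<^sup>2) / real (Suc u)"
proof -
  have "measure_pmf.expectation (WW (Suc (Suc u))) (\<lambda>xs. \<Sum>x\<leftarrow>xs. (norm x)\<^sup>2) =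
     measure_pmf.expectation (WW (Suc u)) (\<lambda>xs. (1 + (1 - r - \<epsilon>) / real (Suc u)) * (\<Sum>x\<leftarrow>xs. (norm x)\<^sup>2) + 0 * 0 + \<epsilon>)"
    unfolding step
  proof (rule exp_cong_pmf)
    fix xs assume "xs \<in> set_pmf (WW (Suc u))"
    then have L: "length xs = Suc u" and S: "set xs \<subseteq> Sset" using supp by blast+
    have "(\<Sum>k<length xs. measure_pmf.expectation (next_step p q p' q' r \<epsilon> (xs ! k))
        (\<lambda>s. \<Sum>x\<leftarrow>xs @ [s]. (norm x)\<^sup>2)) = (\<Sum>k<length xs. measure_pmf.expectation (next_step p q p' q' r \<epsilon> (xs ! k))
        (\<lambda>s. (\<Sum>x\<leftarrow>xs. (norm x)\<^sup>2) + (norm (0 + s))\<^sup>2))"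
      by simp
    then show "(\<Sum>k<length xs. measure_pmf.expectation (next_step p q p' q' r \<epsilon> (xs ! k))
        (\<lambda>s. \<Sum>x\<leftarrow>xs @ [s]. (norm x)\<^sup>2)) / real (length xs) =
       (1 + (1 - r - \<epsilon>) / real (Suc u)) * (\<Sum>x\<leftarrow>xs. (norm x)\<^sup>2) + 0 * 0 + \<epsilon>"
      using inner_sum[OF S L, of "\<Sum>x\<leftarrow>xs. (norm x)\<^sup>2" 0] by (simp add: field_simps)
  qed
  also have "\<dots> = measure_pmf.expectation (WW (Suc u)) (\<lambda>xs. \<Sum>x\<leftarrow>xs. (norm x)\<^sup>2) + \<epsilon> +
   (1 - r - \<epsilon>) * measure_pmf.expectation (WW (Suc u)) (\<lambda>xs. \<Sum>x\<leftarrow>xs. (norm x)\<^sup>2) / real (Suc u)"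
    by (subst exp_lin[OF fin_W]) (simp add: field_simps)
  finally show ?thesis .
qed

lemma rec_M: "measure_pmf.expectation (WW (Suc (Suc u))) (\<lambda>xs. (norm (sum_list xs))\<^sup>2) =
   (1 + 2 * (p - q) / real (Suc u)) * measure_pmf.expectation (WW (Suc u)) (\<lambda>xs. (norm (sum_list xs))\<^sup>2) + \<epsilon> +
   (1 - r - \<epsilon>) * measure_pmf.expectation (WW (Suc u)) (\<lambda>xs. \<Sum>x\<leftarrow>xs. (norm x)\<^sup>2) / real (Suc u)"
proof -
  have "measure_pmf.expectation (WW (Suc (Suc u))) (\<lambda>xs. (norm (sum_list xs))\<^sup>2) =
     measure_pmf.expectation (WW (Suc u)) (\<lambda>xs. (1 + 2 * (p - q) / real (Suc u)) * (norm (sum_list xs))\<^sup>2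
        + ((1 - r - \<epsilon>) / real (Suc u)) * (\<Sum>x\<leftarrow>xs. (norm x)\<^sup>2) + \<epsilon>)"
    unfolding step
  proof (rule exp_cong_pmf)
    fix xs assume "xs \<in> set_pmf (WW (Suc u))"
    then have L: "length xs = Suc u" and S: "set xs \<subseteq> Sset" using supp by blast+
    have "(\<Sum>k<length xs. measure_pmf.expectation (next_step p q p' q' r \<epsilon> (xs ! k))
        (\<lambda>s. (norm (sum_list (xs @ [s])))\<^sup>2)) = (\<Sum>k<length xs. measure_pmf.expectation (next_step p q p' q' r \<epsilon> (xs ! k))
        (\<lambda>s. 0 + (norm (sum_list xs + s))\<^sup>2))"
      by simp
    then have "(\<Sum>k<length xs. measure_pmf.expectation (next_step p q p' q' r \<epsilon> (xs ! k))
        (\<lambda>s. (norm (sum_list (xs @ [s])))\<^sup>2)) / real (length xs) = (\<Sum>k<length xs. measure_pmf.expectation (next_step p q p' q' r \<epsilon> (xs ! k))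
        (\<lambda>s. 0 + (norm (sum_list xs + s))\<^sup>2)) / real (length xs)" by simp
    also note inner_sum[OF S L, of 0 "sum_list xs"]
    also have "0 + (fst (sum_list xs))\<^sup>2 + (snd (sum_list xs))\<^sup>2 + \<epsilon> +
    ((2 * (p - q) * fst (sum_list xs) + 2 * (p' - q') * snd (sum_list xs)) * fst (sum_list xs) +
     (2 * (p - q) * snd (sum_list xs) - 2 * (p' - q') * fst (sum_list xs)) * snd (sum_list xs) +
     (1 - r - \<epsilon>) * (\<Sum>x\<leftarrow>xs. (norm x)\<^sup>2)) / real (Suc u) =
       (1 + 2 * (p - q) / real (Suc u)) * (norm (sum_list xs))\<^sup>2
        + ((1 - r - \<epsilon>) / real (Suc u)) * (\<Sum>x\<leftarrow>xs. (norm x)\<^sup>2) + \<epsilon>"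
      unfolding normsq[of "sum_list xs"] by (rule aux_alg) simp
    finally show "(\<Sum>k<length xs. measure_pmf.expectation (next_step p q p' q' r \<epsilon> (xs ! k))
        (\<lambda>s. (norm (sum_list (xs @ [s])))\<^sup>2)) / real (length xs) =
       (1 + 2 * (p - q) / real (Suc u)) * (norm (sum_list xs))\<^sup>2
        + ((1 - r - \<epsilon>) / real (Suc u)) * (\<Sum>x\<leftarrow>xs. (norm x)\<^sup>2) + \<epsilon>" .
  qed
  also have "\<dots> = (1 + 2 * (p - q) / real (Suc u)) * measure_pmf.expectation (WW (Suc u)) (\<lambda>xs. (norm (sum_list xs))\<^sup>2) + \<epsilon> +
   (1 - r - \<epsilon>) * measure_pmf.expectation (WW (Suc u)) (\<lambda>xs. \<Sum>x\<leftarrow>xs. (norm x)\<^sup>2) / real (Suc u)"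
    by (subst exp_lin[OF fin_W]) (simp add: algebra_simps)
  finally show ?thesis .
qed

end


lemma not_nonpos_pos: "(x::real) > 0 \<Longrightarrow> x \<notin> \<int>\<^sub>\<le>\<^sub>0"
  using nonpos_Ints_nonpos by force

lemma not_nonpos_aux: "(x::real) > -1 \<Longrightarrow> x \<noteq> 0 \<Longrightarrow> x \<notin> \<int>\<^sub>\<le>\<^sub>0"
proof
  assume "x > -1" "x \<noteq> 0" "x \<in> \<int>\<^sub>\<le>\<^sub>0"
  then obtain n :: nat where "x = - real n" by (auto elim!: nonpos_Ints_cases')
  with \<open>x > -1\<close> \<open>x \<noteq> 0\<close> show False by (cases n) auto
qed

lemma alg_A: "(t::real) > 0 \<Longrightarrow> Gt \<noteq> 0 \<Longrightarrow> b \<noteq> 0 \<Longrightarrow> b \<noteq> 1 \<Longrightarrow>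
  X + e + (1 - b) * X / t = C * ((t + 1 - b) * G) / ((1 - b) * (t * Gt)) + e * (t + 1) / b"
  if "X = C * G / ((1 - b) * Gt) + e * t / b"
proof -
  assume a: "t > 0" "Gt \<noteq> 0" "b \<noteq> 0" "b \<noteq> 1"
  then have "1 - b \<noteq> 0" by simp
  with a show ?thesis unfolding that by (simp add: divide_simps) (simp add: algebra_simps)
qed

lemma closed_A:
  fixes A :: "nat \<Rightarrow> real" and e r b C :: real
  assumes b: "b = e + r" "b < 2" "b \<noteq> 1" "b > 0"
    and C: "C = r / (b * Gamma (1 - b))"
    and A1: "A 1 = 1"
    and Ar: "\<And>u. A (Suc (Suc u)) = A (Suc u) + e + (1 - r - e) * A (Suc u) / real (Suc u)"
  shows "A (Suc u) = C * Gamma (real (Suc u) + 1 - b) / ((1 - b) * Gamma (real (Suc u))) + e * real (Suc u) / b"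
proof (induction u)
  case 0
  have nz: "Gamma (1 - b) \<noteq> 0" using b by (intro Gamma_nonzero not_nonpos_aux) auto
  have "Gamma ((1 - b) + 1) = (1 - b) * Gamma (1 - b)" using b by (intro Gamma_plus1 not_nonpos_aux) auto
  then have g: "Gamma (2 - b) = (1 - b) * Gamma (1 - b)" by (simp add: algebra_simps)
  have g': "Gamma (real (Suc 0) + 1 - b) = (1 - b) * Gamma (1 - b)" using g by simp
  have CG: "C * Gamma (1 - b) = r / b" using nz by (simp add: C)
  have "C * Gamma (real (Suc 0) + 1 - b) / ((1 - b) * Gamma (real (Suc 0))) + e * real (Suc 0) / b
      = C * Gamma (1 - b) + e / b" unfolding g' using b(3) by simp
  also have "\<dots> = (e + r) / b" unfolding CG by (simp add: add_divide_distrib)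
  also have "\<dots> = 1" using b(1,4) by simp
  finally show ?case using A1 by simp
next
  case (Suc u)
  define t where "t = real (Suc u)"
  have t0: "t > 0" by (simp add: t_def)
  have G1: "Gamma (t + 1) = t * Gamma t" using t0 by (intro Gamma_plus1 not_nonpos_pos)
  have G2: "Gamma ((t + 1 - b) + 1) = (t + 1 - b) * Gamma (t + 1 - b)"
    using t0 b by (intro Gamma_plus1 not_nonpos_pos) (simp add: t_def)
  have nz: "Gamma t \<noteq> 0" using Gamma_real_pos[OF t0] by simp
  have e1: "real (Suc (Suc u)) = t + 1" by (simp add: t_def)
  have rr: "1 - r - e = 1 - b" using b(1) by simp
  have e2: "t + 1 + 1 - b = (t + 1 - b) + 1" by simp
  show ?case
    unfolding Ar rr e1 unfolding t_def[symmetric] e2 G1 G2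
    using nz t0 b(3,4) Suc.IH[unfolded t_def[symmetric]] by (intro alg_A) auto
qed


lemma alg_M: "(t::real) > 0 \<Longrightarrow> Gt \<noteq> 0 \<Longrightarrow> b \<noteq> 0 \<Longrightarrow> 1 - b \<noteq> 0 \<Longrightarrow> 1 - 2*g \<noteq> 0 \<Longrightarrow> 1 - b - 2*g \<noteq> 0 \<Longrightarrow>
  (1 + 2 * g / t) * (e / ((1 - 2*g) * b) * t + C / (1 - b - 2*g) * (G / Gt) + D * (H / Gt)) + e +
   (1 - b) * (C * G / ((1 - b) * Gt) + e * t / b) / t
  = e / ((1 - 2*g) * b) * (t + 1) + C / (1 - b - 2*g) * (((t + 1 - b) * G) / (t * Gt)) + D * (((t + 2*g) * H) / (t * Gt))"
  apply (simp add: divide_simps)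
  apply (simp add: algebra_simps)
  done

lemma alg_M1: "b \<noteq> 0 \<Longrightarrow> 1 - 2*g \<noteq> 0 \<Longrightarrow> 1 - b - 2*g \<noteq> 0 \<Longrightarrow> b = e + r \<Longrightarrow>
   e / ((1 - 2*g) * b) + r / b * (1 - b) / (1 - b - 2*g) +
   - (e / (b * (1 - 2 * g)) + r / (b * (1 - b - 2 * g))) * (2 * g) = (1::real)"
  apply (simp add: divide_simps)
  apply (simp add: algebra_simps)
  done

lemma rGamma_Gamma_plus1: "(x::real) > -1 \<Longrightarrow> rGamma x * Gamma (x + 1) = x"
proof -
  assume x: "x > -1"
  have "Gamma (x + 1) \<noteq> 0" using x by (intro Gamma_nonzero not_nonpos_pos) simp
  moreover have "x * rGamma (x + 1) = rGamma x" by (rule rGamma_plus1)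
  ultimately show ?thesis by (auto simp: rGamma_inverse_Gamma field_simps)
qed

lemma closed_M:
  fixes A M :: "nat \<Rightarrow> real" and e r b C D g :: real
  assumes b: "b = e + r" "b < 2" "b \<noteq> 1" "b > 0"
    and C: "C = r / (b * Gamma (1 - b))"
    and D: "D = - rGamma (2 * g) * (e / (b * (1 - 2 * g)) + r / (b * (1 - b - 2 * g)))"
    and g: "g > -1/2" "1 - 2 * g \<noteq> 0" "1 - b - 2 * g \<noteq> 0"
    and Acl: "\<And>u. A (Suc u) = C * Gamma (real (Suc u) + 1 - b) / ((1 - b) * Gamma (real (Suc u))) + e * real (Suc u) / b"
    and M1: "M 1 = 1"
    and Mr: "\<And>u. M (Suc (Suc u)) = (1 + 2 * g / real (Suc u)) * M (Suc u) + e + (1 - r - e) * A (Suc u) / real (Suc u)"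
  shows "M (Suc u) = e / ((1 - 2 * g) * b) * real (Suc u)
          + C / (1 - b - 2 * g) * (Gamma (real (Suc u) + 1 - b) / Gamma (real (Suc u)))
          + D * (Gamma (real (Suc u) + 2 * g) / Gamma (real (Suc u)))"
proof (induction u)
  case 0
  have nz: "Gamma (1 - b) \<noteq> 0" using b by (intro Gamma_nonzero not_nonpos_aux) auto
  have "Gamma ((1 - b) + 1) = (1 - b) * Gamma (1 - b)" using b by (intro Gamma_plus1 not_nonpos_aux) auto
  then have g1: "Gamma (real (Suc 0) + 1 - b) = (1 - b) * Gamma (1 - b)" by (simp add: algebra_simps)
  have CG: "C * ((1 - b) * Gamma (1 - b)) = r / b * (1 - b)" using nz by (simp add: C)
  have gg: "Gamma (real (Suc 0) + 2 * g) = Gamma (2 * g + 1)" by (simp add: add.commute)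
  have R: "rGamma (2 * g) * Gamma (2 * g + 1) = 2 * g" using rGamma_Gamma_plus1[of "2 * g"] g(1) by simp
  have "D * Gamma (real (Suc 0) + 2 * g) = - (e / (b * (1 - 2 * g)) + r / (b * (1 - b - 2 * g))) * (rGamma (2 * g) * Gamma (2 * g + 1))"
    unfolding D gg by (simp add: algebra_simps)
  then have DG: "D * Gamma (real (Suc 0) + 2 * g) = - (e / (b * (1 - 2 * g)) + r / (b * (1 - b - 2 * g))) * (2 * g)"
    unfolding R .
  have "e / ((1 - 2 * g) * b) * real (Suc 0)
          + C / (1 - b - 2 * g) * (Gamma (real (Suc 0) + 1 - b) / Gamma (real (Suc 0)))
          + D * (Gamma (real (Suc 0) + 2 * g) / Gamma (real (Suc 0)))
     = e / ((1 - 2 * g) * b) + (C * ((1 - b) * Gamma (1 - b))) / (1 - b - 2 * g)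
          + D * Gamma (real (Suc 0) + 2 * g)"
    unfolding g1 by simp
  also have "\<dots> = 1" unfolding CG DG by (rule alg_M1) (use b g in auto)
  finally show ?case using M1 by simp
next
  case (Suc u)
  define t where "t = real (Suc u)"
  have t0: "t > 0" by (simp add: t_def)
  have G1: "Gamma (t + 1) = t * Gamma t" using t0 by (intro Gamma_plus1 not_nonpos_pos)
  have G2: "Gamma ((t + 1 - b) + 1) = (t + 1 - b) * Gamma (t + 1 - b)"
    using t0 b by (intro Gamma_plus1 not_nonpos_pos) (simp add: t_def)
  have G3: "Gamma ((t + 2 * g) + 1) = (t + 2 * g) * Gamma (t + 2 * g)"
    using t0 g(1) by (intro Gamma_plus1 not_nonpos_pos) (simp add: t_def)
  have nz: "Gamma t \<noteq> 0" using Gamma_real_pos[OF t0] by simp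
  have e1: "real (Suc (Suc u)) = t + 1" by (simp add: t_def)
  have rr: "1 - r - e = 1 - b" using b(1) by simp
  have e2: "t + 1 + 1 - b = (t + 1 - b) + 1" by simp
  have e3: "t + 1 + 2 * g = (t + 2 * g) + 1" by simp
  have A': "A (Suc u) = C * Gamma (t + 1 - b) / ((1 - b) * Gamma t) + e * t / b"
    using Acl[of u] unfolding t_def .
  show ?case
    unfolding Mr rr e1 unfolding t_def[symmetric] e2 e3 G1 G2 G3 Suc.IH[unfolded t_def[symmetric]] A'
    by (rule alg_M) (use t0 nz b g in auto)
qed


lemma closed_a:
  fixes A a :: "nat \<Rightarrow> real" and e r b C :: real
  assumes b: "b = e + r" "b < 2" "b \<noteq> 1" "b > 0"
    and C: "C = r / (b * Gamma (1 - b))"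
    and Acl: "\<And>u. A (Suc u) = C * Gamma (real (Suc u) + 1 - b) / ((1 - b) * Gamma (real (Suc u))) + e * real (Suc u) / b"
    and a1: "a 1 = 1"
    and ar: "\<And>v. a (Suc (Suc v)) = e + (1 - r - e) * A (Suc v) / real (Suc v)"
  shows "a (Suc u) = C * Gamma (real (Suc u) - b) / Gamma (real (Suc u)) + e / b"
proof (cases u)
  case 0
  have nz: "Gamma (1 - b) \<noteq> 0" using b by (intro Gamma_nonzero not_nonpos_aux) auto
  have CG: "C * Gamma (1 - b) = r / b" using nz by (simp add: C)
  have "C * Gamma (real (Suc 0) - b) / Gamma (real (Suc 0)) + e / b = C * Gamma (1 - b) + e / b" by simp
  also have "\<dots> = (e + r) / b" unfolding CG by (simp add: add_divide_distrib)
  also have "\<dots> = 1" using b(1,4) by simp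
  finally show ?thesis using a1 0 by simp
next
  case (Suc v)
  define t where "t = real (Suc v)"
  have t0: "t > 0" by (simp add: t_def)
  have G1: "Gamma (t + 1) = t * Gamma t" using t0 by (intro Gamma_plus1 not_nonpos_pos)
  have nz: "Gamma t \<noteq> 0" using Gamma_real_pos[OF t0] by simp
  have e1: "real (Suc (Suc v)) = t + 1" by (simp add: t_def)
  have rr: "1 - r - e = 1 - b" using b(1) by simp
  have e2: "t + 1 - b = t + 1 - b" by simp
  have A': "A (Suc v) = C * Gamma (t + 1 - b) / ((1 - b) * Gamma t) + e * t / b"
    using Acl[of v] unfolding t_def .
  have b1: "1 - b \<noteq> 0" using b(3) by simp
  show ?thesis
    unfolding Suc ar rr e1 unfolding t_def[symmetric] A' G1
    using t0 nz b1 b(4) by (simp add: divide_simps) (simp add: algebra_simps)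
qed


theorem mainTheorem11:
  fixes p q p' q' r \<epsilon> s1 s2 s3 s4 :: real
  assumes "p \<in> {0<..<1}" "q \<in> {0<..<1}" "p' \<in> {0<..<1}" "q' \<in> {0<..<1}" "r \<in> {0<..<1}"
    and "p + q + p' + q' + r = 1"
    and "\<epsilon> \<in> {0<..<1}"
    and "s1 \<in> {0<..<1}" "s2 \<in> {0<..<1}" "s3 \<in> {0<..<1}" "s4 \<in> {0<..<1}"
    and "s1 + s2 + s3 + s4 = 1"
    and "\<epsilon> + r \<noteq> 1"
  shows
   "let \<gamma> = p - q;
        C = r / ((\<epsilon> + r) * Gamma (1 - \<epsilon> - r));
        D = - rGamma (2 * \<gamma>) *
              (\<epsilon> / ((\<epsilon> + r) * (1 - 2 * \<gamma>)) + r / ((\<epsilon> + r) * (1 - \<epsilon> - r - 2 * \<gamma>)));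
        W = walk_path p q p' q' r \<epsilon> s1 s2 s3 s4
    in (\<forall>t::nat. t \<ge> 1 \<longrightarrow>
          measure_pmf.expectation (W t) (\<lambda>xs. (norm (xs ! (t - 1)))\<^sup>2)
            = C * Gamma (real t - \<epsilon> - r) / Gamma (real t) + \<epsilon> / (\<epsilon> + r))
     \<and> ((-1/2 < \<gamma> \<and> \<gamma> < 1 \<and> \<gamma> \<noteq> 1/2 \<and> 2 * \<gamma> \<noteq> 1 - \<epsilon> - r) \<longrightarrow>
        (\<forall>t::nat. t \<ge> 1 \<longrightarrow>
          measure_pmf.expectation (W t) (\<lambda>xs. (norm (sum_list xs))\<^sup>2)
            = \<epsilon> / ((1 - 2 * \<gamma>) * (\<epsilon> + r)) * real t
              + C / (1 - \<epsilon> - r - 2 * \<gamma>) * (Gamma (real t + 1 - \<epsilon> - r) / Gamma (real t))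
              + D * (Gamma (real t + 2 * \<gamma>) / Gamma (real t))))"
proof -
  have pos: "p > 0" "q > 0" "p' > 0" "q' > 0" "r > 0" "\<epsilon> > 0" "\<epsilon> < 1"
    "s1 > 0" "s2 > 0" "s3 > 0" "s4 > 0" using assms by auto
  have r1: "r < 1" using assms by auto
  note sums = assms(6) assms(12)
  define b where "b = \<epsilon> + r"
  define C where "C = r / ((\<epsilon> + r) * Gamma (1 - \<epsilon> - r))"
  define A where "A = (\<lambda>u. measure_pmf.expectation (walk_path p q p' q' r \<epsilon> s1 s2 s3 s4 u) (\<lambda>xs. \<Sum>x\<leftarrow>xs. (norm x)\<^sup>2))"
  define a where "a = (\<lambda>u. measure_pmf.expectation (walk_path p q p' q' r \<epsilon> s1 s2 s3 s4 u) (\<lambda>xs. (norm (xs ! (u - 1)))\<^sup>2))"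
  define M where "M = (\<lambda>u. measure_pmf.expectation (walk_path p q p' q' r \<epsilon> s1 s2 s3 s4 u) (\<lambda>xs. (norm (sum_list xs))\<^sup>2))"
  have bb: "b = \<epsilon> + r" "b < 2" "b \<noteq> 1" "b > 0" using pos r1 assms(13) by (auto simp: b_def)
  have Cb: "C = r / (b * Gamma (1 - b))" by (simp add: C_def b_def diff_diff_eq)
  have A1: "A 1 = 1" unfolding A_def by (rule base_A[OF pos sums])
  have Ar: "\<And>u. A (Suc (Suc u)) = A (Suc u) + \<epsilon> + (1 - r - \<epsilon>) * A (Suc u) / real (Suc u)"
    unfolding A_def by (rule rec_A[OF pos sums])
  have Acl: "\<And>u. A (Suc u) = C * Gamma (real (Suc u) + 1 - b) / ((1 - b) * Gamma (real (Suc u))) + \<epsilon> * real (Suc u) / b"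
    by (rule closed_A[OF bb Cb A1 Ar])
  have a1: "a 1 = 1" unfolding a_def using base_a[OF pos sums] by simp
  have ar: "\<And>v. a (Suc (Suc v)) = \<epsilon> + (1 - r - \<epsilon>) * A (Suc v) / real (Suc v)"
    unfolding a_def A_def using rec_a[OF pos sums] by simp
  have acl: "\<And>u. a (Suc u) = C * Gamma (real (Suc u) - b) / Gamma (real (Suc u)) + \<epsilon> / b"
    by (rule closed_a[OF bb Cb Acl a1 ar])
  have part1: "\<forall>t::nat. t \<ge> 1 \<longrightarrow>
          measure_pmf.expectation (walk_path p q p' q' r \<epsilon> s1 s2 s3 s4 t) (\<lambda>xs. (norm (xs ! (t - 1)))\<^sup>2)
            = C * Gamma (real t - \<epsilon> - r) / Gamma (real t) + \<epsilon> / (\<epsilon> + r)"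
  proof (intro allI impI)
    fix t :: nat assume "t \<ge> 1"
    then obtain u where t: "t = Suc u" by (cases t) auto
    have E: "real t - b = real t - \<epsilon> - r" by (simp add: b_def)
    have "a t = C * Gamma (real t - \<epsilon> - r) / Gamma (real t) + \<epsilon> / b"
      using acl[of u] unfolding t[symmetric] E .
    then show "measure_pmf.expectation (walk_path p q p' q' r \<epsilon> s1 s2 s3 s4 t) (\<lambda>xs. (norm (xs ! (t - 1)))\<^sup>2)
            = C * Gamma (real t - \<epsilon> - r) / Gamma (real t) + \<epsilon> / (\<epsilon> + r)"
      unfolding a_def b_def .
  qed
  have part2: "(-1/2 < p - q \<and> p - q < 1 \<and> p - q \<noteq> 1/2 \<and> 2 * (p - q) \<noteq> 1 - \<epsilon> - r) \<longrightarrow>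
        (\<forall>t::nat. t \<ge> 1 \<longrightarrow>
          measure_pmf.expectation (walk_path p q p' q' r \<epsilon> s1 s2 s3 s4 t) (\<lambda>xs. (norm (sum_list xs))\<^sup>2)
            = \<epsilon> / ((1 - 2 * (p - q)) * (\<epsilon> + r)) * real t
              + C / (1 - \<epsilon> - r - 2 * (p - q)) * (Gamma (real t + 1 - \<epsilon> - r) / Gamma (real t))
              + (- rGamma (2 * (p - q)) *
              (\<epsilon> / ((\<epsilon> + r) * (1 - 2 * (p - q))) + r / ((\<epsilon> + r) * (1 - \<epsilon> - r - 2 * (p - q))))) * (Gamma (real t + 2 * (p - q)) / Gamma (real t)))"
  proof (intro impI allI)
    fix t :: nat
    assume g: "-1/2 < p - q \<and> p - q < 1 \<and> p - q \<noteq> 1/2 \<and> 2 * (p - q) \<noteq> 1 - \<epsilon> - r" and "t \<ge> 1"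
    then obtain u where t: "t = Suc u" by (cases t) auto
    define g where "g = p - q"
    define D where "D = - rGamma (2 * g) * (\<epsilon> / ((\<epsilon> + r) * (1 - 2 * g)) + r / ((\<epsilon> + r) * (1 - \<epsilon> - r - 2 * g)))"
    have gg: "g > -1/2" "1 - 2 * g \<noteq> 0" "1 - b - 2 * g \<noteq> 0" using g by (auto simp: g_def b_def)
    have Db: "D = - rGamma (2 * g) * (\<epsilon> / (b * (1 - 2 * g)) + r / (b * (1 - b - 2 * g)))"
      by (simp add: D_def b_def diff_diff_eq)
    have M1: "M 1 = 1" unfolding M_def by (rule base_M[OF pos sums])
    have Mr: "\<And>u. M (Suc (Suc u)) = (1 + 2 * g / real (Suc u)) * M (Suc u) + \<epsilon> + (1 - r - \<epsilon>) * A (Suc u) / real (Suc u)"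
      unfolding M_def A_def g_def by (rule rec_M[OF pos sums])
    have Mcl: "M (Suc u) = \<epsilon> / ((1 - 2 * g) * b) * real (Suc u)
          + C / (1 - b - 2 * g) * (Gamma (real (Suc u) + 1 - b) / Gamma (real (Suc u)))
          + D * (Gamma (real (Suc u) + 2 * g) / Gamma (real (Suc u)))"
      by (rule closed_M[OF bb Cb Db gg Acl M1 Mr])
    have e1: "1 - b - 2 * g = 1 - \<epsilon> - r - 2 * g" "real (Suc u) + 1 - b = real (Suc u) + 1 - \<epsilon> - r"
      by (simp_all add: b_def)
    show "measure_pmf.expectation (walk_path p q p' q' r \<epsilon> s1 s2 s3 s4 t) (\<lambda>xs. (norm (sum_list xs))\<^sup>2)
            = \<epsilon> / ((1 - 2 * (p - q)) * (\<epsilon> + r)) * real t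
              + C / (1 - \<epsilon> - r - 2 * (p - q)) * (Gamma (real t + 1 - \<epsilon> - r) / Gamma (real t))
              + (- rGamma (2 * (p - q)) *
              (\<epsilon> / ((\<epsilon> + r) * (1 - 2 * (p - q))) + r / ((\<epsilon> + r) * (1 - \<epsilon> - r - 2 * (p - q))))) * (Gamma (real t + 2 * (p - q)) / Gamma (real t))"
      using Mcl unfolding e1 unfolding M_def t D_def g_def b_def .
  qed
  show ?thesis
    unfolding Let_def C_def[symmetric] using part1 part2 by blast
qed

end
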